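(* Let $I=[x_1,x_N]$ with partition $x_1<\dots<x_N$ and affine maps $u_i(x)=a_ix+b_i$ with $u_i(x_1)=x_i$, $u_i(x_N)=x_{i+1}$ ($i\in\mathbb{N}_{N-1}$). Let $f,g\in C(I)$ with $f\ge g$ on $I$ and let $\{q_n\}$ be a sequence in $(0,1]$ with $\lim q_n=1$. Set $\phi(f-g,i)=\min_{x\in I}(f-g)(u_i(x))$, $\Phi_n(f)=\max_{x\in I}M_{n,q_n}f(x)$, $\phi(g)=\min_{x\in I}g(x)$. Suppose the continuous scaling functions satisfy (1) $\|\alpha\|_\infty<1$ and (2) for all $n\in\mathbb{N}$, $i\in\mathbb{N}_{N-1}$, $x\in I$: \[ 0\le\alpha_i(x)\le\min\left\{\frac{\phi(f-g,i)}{\Phi_n(f)-\phi(g)},1\right\}. \] Then the quantum MKZ-fractal functions satisfy $f^{(q_n,\alpha)}_n\ge g$ on $I$ for every $n\in\mathbb{N}$, and $f^{(q_n,\alpha)}_n\to f$ uniformly on $I$.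
   Context: For $q\in(0,1]$: $[k]_q=\frac{1-q^k}{1-q}$ ($q\ne1$), $[k]_1=k$, $q$-factorials, $\binom{n}{k}_q=\frac{[n]_q!}{[k]_q![n-k]_q!}$. Quantum MKZ operator: $M_{n,q}h(x)=P_{n,q}(x)\sum_{k\ge0}\binom{n+k}{k}_q\left(\frac{x-x_1}{x_N-x_1}\right)^k h\!\left(x_1+(x_N-x_1)\frac{[k]_q}{[k+n]_q}\right)$ for $x_1\le x<x_N$, $M_{n,q}h(x_N)=h(x_N)$, $P_{n,q}(x)=\prod_{j=0}^n(x_N-x_1-q^j(x-x_1))/(x_N-x_1)^{n+1}$. $\|\alpha\|_\infty=\max_i\|\alpha_i\|_\infty$. The quantum MKZ-fractal function $h^{(q,\alpha)}_n$ of $h\in C(I)$ is the unique $G\in C(I)$ with $G(u_i(x))=h(u_i(x))+\alpha_i(x)(G(x)-M_{n,q}h(x))$ for all $x\in I$, $i\in\mathbb{N}_{N-1}$. *)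

theory Defs
  imports "HOL-Analysis.Analysis"
begin

definition qint :: "real \<Rightarrow> nat \<Rightarrow> real" where
  "qint q k = (if q = 1 then real k else (1 - q ^ k) / (1 - q))"

definition qfact :: "real \<Rightarrow> nat \<Rightarrow> real" where
  "qfact q n = (\<Prod>k\<in>{1..n}. qint q k)"

definition qbinom :: "real \<Rightarrow> nat \<Rightarrow> nat \<Rightarrow> real" where
  "qbinom q n k = qfact q n / (qfact q k * qfact q (n - k))"

definition mkzP :: "real \<Rightarrow> real \<Rightarrow> nat \<Rightarrow> real \<Rightarrow> real \<Rightarrow> real" where
  "mkzP x1 xN n q x =
     (\<Prod>j\<in>{0..n}. (xN - x1 - q ^ j * (x - x1))) / (xN - x1) ^ (n + 1)"

definition mkz :: "real \<Rightarrow> real \<Rightarrow> nat \<Rightarrow> real \<Rightarrow> (real \<Rightarrow> real) \<Rightarrow> real \<Rightarrow> real" where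
  "mkz x1 xN n q h x =
     (if x = xN then h xN
      else mkzP x1 xN n q x *
        (\<Sum>k. qbinom q (n + k) k * ((x - x1) / (xN - x1)) ^ k *
               h (x1 + (xN - x1) * (qint q k / qint q (k + n)))))"

definition mkz_fractal ::
  "real \<Rightarrow> real \<Rightarrow> nat \<Rightarrow> (nat \<Rightarrow> real \<Rightarrow> real) \<Rightarrow> (nat \<Rightarrow> real \<Rightarrow> real)
    \<Rightarrow> nat \<Rightarrow> real \<Rightarrow> (real \<Rightarrow> real) \<Rightarrow> real \<Rightarrow> real" where
  "mkz_fractal x1 xN N u \<alpha> n q h =
     (THE G. continuous_on {x1..xN} G \<and> (\<forall>y. y \<notin> {x1..xN} \<longrightarrow> G y = 0) \<and>
        (\<forall>i\<in>{1..N-1}. \<forall>y\<in>{x1..xN}.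
            G (u i y) = h (u i y) + \<alpha> i y * (G y - mkz x1 xN n q h y)))"

end

theory Submission
  imports Defs
begin
lemma qint_sum: "qint q k = (\<Sum>j<k. q ^ j)"
  by (simp add: qint_def sum_gp_strict)

lemma qint_0[simp]: "qint q 0 = 0"
  by (simp add: qint_sum)

lemma qint_pos: "0 < q \<Longrightarrow> 1 \<le> k \<Longrightarrow> 0 < qint q k"
proof -
  assume q: "0 < q" and k: "1 \<le> k"
  have "0 < (\<Sum>j<k. q ^ j)"
    by (rule sum_pos2[where i=0]) (use q k in auto)
  thus ?thesis by (simp add: qint_sum)
qed

lemma qint_nonneg: "0 < q \<Longrightarrow> 0 \<le> qint q k"
  by (simp add: qint_sum sum_nonneg)

lemma qint_add: "qint q (m + k) = qint q m + q ^ m * qint q k"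
  by (induction k) (auto simp: qint_sum algebra_simps power_add)

lemma qint_mono: "0 < q \<Longrightarrow> j \<le> k \<Longrightarrow> qint q j \<le> qint q k"
  unfolding qint_sum by (rule sum_mono2) auto

lemma qfact_Suc: "qfact q (Suc m) = qfact q m * qint q (Suc m)"
  by (simp add: qfact_def)

lemma qfact_0[simp]: "qfact q 0 = 1"
  by (simp add: qfact_def)

lemma qfact_pos: "0 < q \<Longrightarrow> 0 < qfact q m"
  unfolding qfact_def by (rule prod_pos) (auto intro: qint_pos)

definition cc :: "real \<Rightarrow> nat \<Rightarrow> nat \<Rightarrow> real" where
  "cc q n k = qbinom q (n + k) k"

lemma cc_alt: "cc q n k = qfact q (n + k) / (qfact q k * qfact q n)"
  by (simp add: cc_def qbinom_def)

lemma cc_pos: "0 < q \<Longrightarrow> 0 < cc q n k"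
  by (simp add: cc_alt qfact_pos)

lemma cc_0[simp]: "0 < q \<Longrightarrow> cc q n 0 = 1"
  using qfact_pos[of q n] by (simp add: cc_alt)

lemma cc_n0[simp]: "0 < q \<Longrightarrow> cc q 0 k = 1"
  using qfact_pos[of q k] by (simp add: cc_alt)

lemma cc_rec: assumes q: "0 < q"
  shows "cc q (Suc n) (Suc k) = q ^ Suc n * cc q (Suc n) k + cc q n (Suc k)"
proof -
  define X where "X = qfact q (Suc n + k)"
  have X: "0 < X" using qfact_pos[OF q] by (simp add: X_def)
  have A: "qfact q k > 0" "qfact q n > 0" using qfact_pos[OF q] by auto
  have B: "qint q (Suc k) > 0" "qint q (Suc n) > 0" using qint_pos[OF q] by auto
  have e1: "qfact q (Suc n + Suc k) = X * qint q (Suc n + Suc k)"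
    by (simp add: X_def qfact_Suc[symmetric])
  have e2: "qfact q (n + Suc k) = X" by (simp add: X_def)
  have e3: "qint q (Suc n + Suc k) = qint q (Suc n) + q ^ Suc n * qint q (Suc k)"
    by (rule qint_add)
  show ?thesis
    unfolding cc_alt e1 e2 qfact_Suc[of q k] qfact_Suc[of q n]
    using A B X unfolding X_def[symmetric] e3
    by (simp add: field_simps)
qed

lemma cc_shift: assumes q: "0 < q"
  shows "cc q n (Suc k) * (qint q (Suc k) / qint q (Suc k + n)) = cc q n k"
proof -
  have A: "qfact q k > 0" "qfact q n > 0" "qfact q (n+k) > 0" using qfact_pos[OF q] by auto
  have B: "qint q (Suc k) > 0" "qint q (Suc (n + k)) > 0" using qint_pos[OF q] by auto
  show ?thesis unfolding cc_alt using A B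
    by (simp add: qfact_Suc field_simps)
qed

definition PP :: "real \<Rightarrow> nat \<Rightarrow> real \<Rightarrow> real" where
  "PP q n t = (\<Prod>j\<in>{0..n}. (1 - q ^ j * t))"

lemma PP_Suc: "PP q (Suc n) t = PP q n t * (1 - q ^ Suc n * t)"
  by (simp add: PP_def prod.atLeast0_atMost_Suc)

lemma qpow_t: "0 < (q::real) \<Longrightarrow> q \<le> 1 \<Longrightarrow> 0 \<le> t \<Longrightarrow> t < 1 \<Longrightarrow> 0 \<le> q ^ j * t \<and> q ^ j * t < 1"
proof -
  assume a: "0 < q" "q \<le> 1" "0 \<le> t" "t < 1"
  have "q ^ j \<le> 1" by (rule power_le_one) (use a in auto)
  hence "q ^ j * t \<le> t" using a by (simp add: mult_left_le_one_le)
  thus ?thesis using a by auto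
qed

lemma PP_pos: "0 < q \<Longrightarrow> q \<le> 1 \<Longrightarrow> 0 \<le> t \<Longrightarrow> t < 1 \<Longrightarrow> 0 < PP q n t"
  unfolding PP_def by (rule prod_pos) (use qpow_t in force)

lemma A_sums:
  assumes q: "0 < q" "q \<le> 1" and t: "0 \<le> t" "t < 1"
  shows "(\<lambda>k. cc q n k * t ^ k) sums (1 / PP q n t)"
proof (induction n)
  case 0
  have "(\<lambda>k. t ^ k) sums (1 / (1 - t))" by (rule geometric_sums) (use t in auto)
  thus ?case using q by (simp add: PP_def)
next
  case (Suc n)
  define a where "a = (\<lambda>k. cc q (Suc n) k * t ^ k)"
  define b where "b = (\<lambda>k. cc q n k * t ^ k)"
  define r where "r = q ^ Suc n * t"
  have r: "0 \<le> r" "r < 1" using qpow_t[OF q t, of "Suc n"] unfolding r_def by auto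
  have apos: "0 \<le> a k" for k using cc_pos[OF q(1), of "Suc n" k] t by (simp add: a_def)
  have bpos: "0 \<le> b k" for k using cc_pos[OF q(1), of n k] t by (simp add: b_def)
  have bs: "b sums (1 / PP q n t)" using Suc by (simp add: b_def)
  define B where "B = 1 / PP q n t"
  have a0: "a 0 = b 0" using q by (simp add: a_def b_def)
  have aS: "a (Suc k) = r * a k + b (Suc k)" for k
    unfolding a_def b_def r_def cc_rec[OF q(1)] by (simp add: algebra_simps)
  have ps: "(\<Sum>i<Suc K. a i) = r * (\<Sum>i<K. a i) + (\<Sum>i<Suc K. b i)" for K
  proof (induction K)
    case 0 thus ?case using a0 by simp
  next
    case (Suc K)
    have ih: "(\<Sum>i<K. a i) + a K = r * (\<Sum>i<K. a i) + (\<Sum>i<K. b i) + b K"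
      using Suc.IH by simp
    show ?case unfolding sum.lessThan_Suc aS[of K] distrib_left using ih
      by linarith

  qed
  have bB: "(\<Sum>i<K. b i) \<le> B" for K
    unfolding B_def using bs bpos sums_unique[OF bs] sum_le_suminf[of b "{..<K}"]
    by (auto simp: sums_summable)
  have aB: "(\<Sum>i<K. a i) \<le> B / (1 - r)" for K
  proof -
    have "(\<Sum>i<K. a i) \<le> (\<Sum>i<Suc K. a i)" using apos by simp
    also have "\<dots> \<le> B / (1 - r)"
    proof -
      have "(\<Sum>i<Suc K. a i) \<le> r * (\<Sum>i<Suc K. a i) + B"
      proof -
        have "(\<Sum>i<K. a i) \<le> (\<Sum>i<Suc K. a i)" using apos by simp
        hence "r * (\<Sum>i<K. a i) \<le> r * (\<Sum>i<Suc K. a i)" using r(1) by (rule mult_left_mono)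
        thus ?thesis using ps[of K] bB[of "Suc K"] by linarith
      qed
      thus ?thesis using r by (simp add: field_simps)
    qed
    finally show ?thesis .
  qed
  have sa: "summable a" by (rule summableI_nonneg_bounded[OF apos aB])
  define A where "A = suminf a"
  have "(\<lambda>k. a (Suc k)) sums (r * A + (B - b 0))"
  proof -
    have "(\<lambda>k. r * a k) sums (r * A)" using sa A_def by (simp add: summable_sums sums_mult)
    moreover have "(\<lambda>k. b (Suc k)) sums (B - b 0)"
      using bs unfolding B_def by (subst sums_Suc_iff) simp
    ultimately show ?thesis unfolding aS by (rule sums_add)
  qed
  hence "a sums (r * A + (B - b 0) + a 0)" by (rule sums_Suc)
  hence "A = r * A + (B - b 0) + a 0" unfolding A_def by (rule sums_unique[symmetric])
  hence "A = r * A + B" using a0 by simp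
  hence "A = B / (1 - r)" using r by (simp add: field_simps)
  hence "A = 1 / PP q (Suc n) t" unfolding B_def PP_Suc r_def by simp
  hence "a sums (1 / PP q (Suc n) t)" using summable_sums[OF sa] unfolding A_def by simp
  thus ?case by (simp add: a_def)
qed

definition wt :: "real \<Rightarrow> nat \<Rightarrow> real \<Rightarrow> nat \<Rightarrow> real" where
  "wt q n t k = PP q n t * cc q n k * t ^ k"

definition nd :: "real \<Rightarrow> nat \<Rightarrow> nat \<Rightarrow> real" where
  "nd q n k = qint q k / qint q (k + n)"

context
  fixes q t :: real and n :: nat
  assumes q: "0 < q" "q \<le> 1" and t: "0 \<le> t" "t < 1" and n: "1 \<le> n"
begin

lemma wt_nonneg: "0 \<le> wt q n t k"
  unfolding wt_def using PP_pos[OF q t, of n] cc_pos[OF q(1), of n k] t by simp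

lemma wt_sums: "(\<lambda>k. wt q n t k) sums 1"
proof -
  have "(\<lambda>k. PP q n t * (cc q n k * t ^ k)) sums (PP q n t * (1 / PP q n t))"
    by (rule sums_mult[OF A_sums[OF q t]])
  thus ?thesis using PP_pos[OF q t, of n] by (simp add: wt_def mult.assoc)
qed

lemma nd_0: "nd q n 0 = 0" by (simp add: nd_def)

lemma nd_range: "0 \<le> nd q n k \<and> nd q n k \<le> 1"
proof -
  have "0 < qint q (k + n)" using qint_pos[OF q(1)] n by simp
  moreover have "qint q k \<le> qint q (k + n)" by (rule qint_mono[OF q(1)]) simp
  ultimately show ?thesis using qint_nonneg[OF q(1), of k] by (simp add: nd_def)
qed

lemma wt_nd_Suc: "wt q n t (Suc k) * nd q n (Suc k) = t * wt q n t k"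
proof -
  have "wt q n t (Suc k) * nd q n (Suc k) =
    PP q n t * t ^ Suc k * (cc q n (Suc k) * (qint q (Suc k) / qint q (Suc k + n)))"
    by (simp add: wt_def nd_def)
  also have "\<dots> = t * wt q n t k" unfolding cc_shift[OF q(1)] by (simp add: wt_def)
  finally show ?thesis .
qed

lemma wt_nd_sums: "(\<lambda>k. wt q n t k * nd q n k) sums t"
proof -
  have "(\<lambda>k. wt q n t (Suc k) * nd q n (Suc k)) sums (t * 1)"
    unfolding wt_nd_Suc by (rule sums_mult[OF wt_sums])
  from sums_Suc[OF this] show ?thesis by (simp add: nd_0)
qed

lemma nd_Suc_le: "nd q n (Suc k) \<le> 1 / qint q n + nd q n k"
proof -
  define A where "A = qint q k"
  define B where "B = qint q (k + n)"
  have A: "0 \<le> A" using qint_nonneg[OF q(1)] A_def by simp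
  have B: "0 < B" using qint_pos[OF q(1)] n B_def by simp
  have qn: "0 < qint q n" using qint_pos[OF q(1)] n by simp
  have e1: "qint q (Suc k) = 1 + q * A" using qint_add[of q 1 k] by (simp add: A_def qint_sum)
  have e2: "qint q (Suc k + n) = 1 + q * B" using qint_add[of q 1 "k + n"] by (simp add: B_def qint_sum)
  have m: "qint q n \<le> 1 + q * B" unfolding e2[symmetric] by (rule qint_mono[OF q(1)]) simp
  have "nd q n (Suc k) = 1 / (1 + q * B) + q * A / (1 + q * B)"
    unfolding nd_def e1 e2 using B q by (simp add: add_divide_distrib)
  also have "1 / (1 + q * B) \<le> 1 / qint q n" using m qn by (simp add: frac_le)
  also have "q * A / (1 + q * B) \<le> A / B"
  proof -
    have "0 < 1 + q * B" using B q by (simp add: add_pos_pos)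
    moreover have "q * A * B \<le> A * (1 + q * B)" using A by (simp add: algebra_simps)
    ultimately show ?thesis using B by (simp add: divide_simps)
  qed
  also have "A / B = nd q n k" by (simp add: nd_def A_def B_def)
  finally show ?thesis by simp
qed

lemma wt_nd2:
  "summable (\<lambda>k. wt q n t k * nd q n k ^ 2) \<and>
   (\<Sum>k. wt q n t k * nd q n k ^ 2) \<le> t ^ 2 + t / qint q n"
proof -
  define f where "f = (\<lambda>k. wt q n t k * nd q n k ^ 2)"
  define g where "g = (\<lambda>k. t * (1 / qint q n) * wt q n t k + t * (wt q n t k * nd q n k))"
  have gs: "g sums (t * (1 / qint q n) * 1 + t * t)"
    unfolding g_def by (intro sums_add sums_mult wt_sums wt_nd_sums)
  have fS: "f (Suc k) = t * wt q n t k * nd q n (Suc k)" for k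
    using wt_nd_Suc[of k] by (simp add: f_def power2_eq_square)
  have fle: "f (Suc k) \<le> g k" for k
  proof -
    have "t * wt q n t k \<ge> 0" using t wt_nonneg by simp
    hence "t * wt q n t k * nd q n (Suc k) \<le> t * wt q n t k * (1 / qint q n + nd q n k)"
      using nd_Suc_le[of k] by (intro mult_left_mono) auto
    thus ?thesis unfolding fS g_def by (simp add: algebra_simps)
  qed
  have fpos: "0 \<le> f k" for k unfolding f_def using wt_nonneg by simp
  have sfS: "summable (\<lambda>k. f (Suc k))"
    by (rule summable_comparison_test'[OF sums_summable[OF gs]]) (use fpos fle in auto)
  have "(\<Sum>k. f (Suc k)) \<le> suminf g"
    by (rule suminf_le[OF fle sfS sums_summable[OF gs]])
  also have "\<dots> = t ^ 2 + t / qint q n" using sums_unique[OF gs] by (simp add: power2_eq_square)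
  finally have le: "(\<Sum>k. f (Suc k)) \<le> t ^ 2 + t / qint q n" .
  have f0: "f 0 = 0" by (simp add: f_def nd_0)
  have "summable f" using sfS by (simp add: summable_Suc_iff)
  moreover have "suminf f = (\<Sum>k. f (Suc k))" using suminf_split_head[OF \<open>summable f\<close>] f0 by simp
  ultimately show ?thesis using le unfolding f_def by simp
qed

end

lemma wavg:
  fixes w :: "nat \<Rightarrow> real" and p :: "nat \<Rightarrow> real" and h \<phi> :: "real \<Rightarrow> real"
  assumes w0: "\<And>k. 0 \<le> w k" and ws: "w sums 1"
    and p: "\<And>k. p k \<in> {0..1}"
    and hb: "\<And>s. s \<in> {0..1} \<Longrightarrow> \<bar>h s - c\<bar> \<le> e + K * \<phi> s"
    and s\<phi>: "summable (\<lambda>k. w k * \<phi> (p k))"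
    and B: "\<And>s. s \<in> {0..1} \<Longrightarrow> \<bar>h s\<bar> \<le> B"
  shows "summable (\<lambda>k. w k * h (p k)) \<and>
         \<bar>(\<Sum>k. w k * h (p k)) - c\<bar> \<le> e + K * (\<Sum>k. w k * \<phi> (p k))"
proof -
  have sw: "summable w" using ws by (rule sums_summable)
  have sB: "summable (\<lambda>k. B * w k)" using sw by (rule summable_mult)
  have nb: "norm (w k * h (p k)) \<le> B * w k" for k
  proof -
    have "w k * \<bar>h (p k)\<bar> \<le> w k * B" using B[OF p[of k]] w0[of k] by (rule mult_left_mono)
    thus ?thesis using w0[of k] by (simp add: abs_mult mult.commute)
  qed
  have sh: "summable (\<lambda>k. w k * h (p k))"
    by (rule summable_comparison_test'[OF sB, where N=0]) (rule nb)
  have sc: "(\<lambda>k. w k * c) sums (1 * c)" using ws by (rule sums_mult2)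
  have d: "(\<lambda>k. w k * h (p k) - w k * c) sums ((\<Sum>k. w k * h (p k)) - c)"
    using sums_diff[OF summable_sums[OF sh] sc] by simp
  define g where "g = (\<lambda>k. e * w k + K * (w k * \<phi> (p k)))"
  have gs: "g sums (e * 1 + K * (\<Sum>k. w k * \<phi> (p k)))"
    unfolding g_def by (intro sums_add sums_mult ws summable_sums[OF s\<phi>])
  have le: "\<bar>w k * h (p k) - w k * c\<bar> \<le> g k" for k
  proof -
    have "\<bar>w k * h (p k) - w k * c\<bar> = w k * \<bar>h (p k) - c\<bar>"
      using w0[of k] by (simp only: right_diff_distrib[symmetric] abs_mult abs_of_nonneg)
    also have "\<dots> \<le> w k * (e + K * \<phi> (p k))" using hb[OF p[of k]] w0[of k] by (rule mult_left_mono)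
    finally show ?thesis unfolding g_def by (simp only: distrib_left mult.commute mult.left_commute)
  qed
  have sa: "summable (\<lambda>k. \<bar>w k * h (p k) - w k * c\<bar>)"
    by (rule summable_comparison_test'[OF sums_summable[OF gs]]) (use le in auto)
  have "\<bar>(\<Sum>k. w k * h (p k)) - c\<bar> = \<bar>\<Sum>k. w k * h (p k) - w k * c\<bar>"
    using sums_unique[OF d] by simp
  also have "\<dots> \<le> (\<Sum>k. \<bar>w k * h (p k) - w k * c\<bar>)" by (rule summable_rabs[OF sa])
  also have "\<dots> \<le> suminf g" by (rule suminf_le[OF le sa sums_summable[OF gs]])
  also have "\<dots> = e + K * (\<Sum>k. w k * \<phi> (p k))" using sums_unique[OF gs] by simp
  finally show ?thesis using sh by simp
qed

context
  fixes h :: "real \<Rightarrow> real"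
  assumes hc: "continuous_on {0..1} h"
begin

lemma h_bound: "\<exists>B. 0 \<le> B \<and> (\<forall>s\<in>{0..1}. \<bar>h s\<bar> \<le> B)"
proof -
  have "bounded (h ` {0..1})" by (rule compact_imp_bounded[OF compact_continuous_image[OF hc]]) simp
  then obtain B where "\<forall>y\<in>h ` {0..1}. norm y \<le> B" by (auto simp: bounded_iff)
  hence "\<forall>s\<in>{0..1}. \<bar>h s\<bar> \<le> B" by auto
  moreover hence "0 \<le> B" using abs_ge_zero[of "h 0"] by force
  ultimately show ?thesis by blast
qed

lemma h_uc: "\<And>e. 0 < e \<Longrightarrow> \<exists>d>0. \<forall>s\<in>{0..1}. \<forall>y\<in>{0..1}. \<bar>s - y\<bar> < d \<longrightarrow> \<bar>h s - h y\<bar> < e"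
proof -
  fix e :: real assume e: "0 < e"
  have "uniformly_continuous_on {0..1} h" by (rule compact_uniformly_continuous[OF hc]) simp
  from this[unfolded uniformly_continuous_on_def, rule_format, OF e]
  show "\<exists>d>0. \<forall>s\<in>{0..1}. \<forall>y\<in>{0..1}. \<bar>s - y\<bar> < d \<longrightarrow> \<bar>h s - h y\<bar> < e"
    by (auto simp: dist_real_def)
qed

lemma approx_unif:
  assumes e: "0 < e"
  shows "\<exists>K\<ge>0. \<forall>q n t. 0 < q \<longrightarrow> q \<le> 1 \<longrightarrow> 1 \<le> n \<longrightarrow> 0 \<le> t \<longrightarrow> t < 1 \<longrightarrow>
     \<bar>(\<Sum>k. wt q n t k * h (nd q n k)) - h t\<bar> \<le> e + K / qint q n"
proof -
  obtain B where B: "0 \<le> B" "\<forall>s\<in>{0..1}. \<bar>h s\<bar> \<le> B" using h_bound by blast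
  obtain d where d: "d > 0" "\<forall>s\<in>{0..1}. \<forall>y\<in>{0..1}. \<bar>s - y\<bar> < d \<longrightarrow> \<bar>h s - h y\<bar> < e"
    using h_uc[OF e] by blast
  define K where "K = 2 * B / d ^ 2"
  have K: "0 \<le> K" using B d by (simp add: K_def)
  have pw: "\<bar>h s - h y\<bar> \<le> e + K * (s - y) ^ 2" if s: "s \<in> {0..1}" and y: "y \<in> {0..1}" for s y
  proof (cases "\<bar>s - y\<bar> < d")
    case True
    have "0 \<le> K * (s - y) ^ 2" using K by simp
    thus ?thesis using d(2) s y True by fastforce
  next
    case False
    hence "d \<le> \<bar>s - y\<bar>" by simp
    hence "d ^ 2 \<le> \<bar>s - y\<bar> ^ 2" by (rule power_mono) (use d in auto)
    hence "d ^ 2 \<le> (s - y) ^ 2" by simp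
    hence "2 * B * d ^ 2 \<le> 2 * B * (s - y) ^ 2" using B by (intro mult_left_mono) auto
    hence "2 * B \<le> K * (s - y) ^ 2" using d B unfolding K_def by (simp add: field_simps)
    moreover have "\<bar>h s - h y\<bar> \<le> 2 * B"
    proof -
      have "\<bar>h s\<bar> \<le> B" "\<bar>h y\<bar> \<le> B" using B(2) s y by auto
      thus ?thesis using abs_triangle_ineq4[of "h s" "h y"] by linarith
    qed
    ultimately show ?thesis using e by linarith
  qed
  show ?thesis
  proof (intro exI[of _ K] conjI K allI impI)
    fix q t :: real and n :: nat
    assume q0: "0 < q" and q1: "q \<le> 1" and n: "1 \<le> n" and t0: "0 \<le> t" and t1: "t < 1"
    note W = wt_nonneg[OF q0 q1 t0 t1 n] wt_sums[OF q0 q1 t0 t1 n] nd_range[OF q0 q1 t0 t1 n]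
      wt_nd_sums[OF q0 q1 t0 t1 n] wt_nd2[OF q0 q1 t0 t1 n]
    have qn: "0 < qint q n" using qint_pos[OF q0 n] .
    define S2 where "S2 = (\<Sum>k. wt q n t k * nd q n k ^ 2)"
    have s2: "(\<lambda>k. wt q n t k * nd q n k ^ 2) sums S2" using W(5) S2_def summable_sums by blast
    have "(\<lambda>k. wt q n t k * nd q n k ^ 2 - 2 * t * (wt q n t k * nd q n k) + t ^ 2 * wt q n t k)
        sums (S2 - 2 * t * t + t ^ 2 * 1)"
      by (intro sums_add sums_diff sums_mult s2 W(2) W(4))
    hence sq: "(\<lambda>k. wt q n t k * (nd q n k - t) ^ 2) sums (S2 - t ^ 2)"
      by (simp add: power2_eq_square algebra_simps)
    have "S2 - t ^ 2 \<le> 1 / qint q n"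
    proof -
      have "S2 \<le> t ^ 2 + t / qint q n" using W(5) S2_def by simp
      moreover have "t / qint q n \<le> 1 / qint q n" using t1 qn by (simp add: divide_right_mono)
      ultimately show ?thesis by simp
    qed
    hence "K * (S2 - t ^ 2) \<le> K * (1 / qint q n)" using K by (rule mult_left_mono)
    hence KS: "K * (S2 - t ^ 2) \<le> K / qint q n" by simp
    have "\<bar>(\<Sum>k. wt q n t k * h (nd q n k)) - h t\<bar> \<le> e + K * (\<Sum>k. wt q n t k * (nd q n k - t) ^ 2)"
    proof -
      have ty: "t \<in> {0..1}" using t0 t1 by simp
      have X: "\<And>s. s \<in> {0..1} \<Longrightarrow> \<bar>h s - h t\<bar> \<le> e + K * (\<lambda>s. (s - t) ^ 2) s"
        using pw[OF _ ty] by simp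
      have Y: "\<And>s. s \<in> {0..1} \<Longrightarrow> \<bar>h s\<bar> \<le> B" using B(2) by blast
      have Z: "summable (\<lambda>k. wt q n t k * (\<lambda>s. (s - t) ^ 2) (nd q n k))"
        using sums_summable[OF sq] by simp
      have "\<And>k. nd q n k \<in> {0..1}" using W(3) by simp
      from wavg[OF W(1) W(2) this X Z Y] show ?thesis by simp
    qed
    also have "\<dots> = e + K * (S2 - t ^ 2)" using sums_unique[OF sq] by simp
    finally show "\<bar>(\<Sum>k. wt q n t k * h (nd q n k)) - h t\<bar> \<le> e + K / qint q n" using KS by linarith
  qed
qed

lemma approx_end:
  assumes e: "0 < e"
  shows "\<exists>K\<ge>0. \<forall>q n t. 0 < q \<longrightarrow> q \<le> 1 \<longrightarrow> 1 \<le> n \<longrightarrow> 0 \<le> t \<longrightarrow> t < 1 \<longrightarrow>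
     \<bar>(\<Sum>k. wt q n t k * h (nd q n k)) - h 1\<bar> \<le> e + K * (1 - t)"
proof -
  obtain B where B: "0 \<le> B" "\<forall>s\<in>{0..1}. \<bar>h s\<bar> \<le> B" using h_bound by blast
  obtain d where d: "d > 0" "\<forall>s\<in>{0..1}. \<forall>y\<in>{0..1}. \<bar>s - y\<bar> < d \<longrightarrow> \<bar>h s - h y\<bar> < e"
    using h_uc[OF e] by blast
  define K where "K = 2 * B / d"
  have K: "0 \<le> K" using B d by (simp add: K_def)
  have pw: "\<bar>h s - h 1\<bar> \<le> e + K * (1 - s)" if s: "s \<in> {0..1}" for s
  proof (cases "\<bar>s - 1\<bar> < d")
    case True
    have "0 \<le> K * (1 - s)" using K s by simp
    thus ?thesis using d(2) s True by fastforce
  next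
    case False
    hence "d \<le> 1 - s" using s by auto
    hence "2 * B * d \<le> 2 * B * (1 - s)" using B by (intro mult_left_mono) auto
    hence "2 * B \<le> K * (1 - s)" using d B unfolding K_def by (simp add: field_simps)
    moreover have "\<bar>h s - h 1\<bar> \<le> 2 * B"
    proof -
      have "\<bar>h s\<bar> \<le> B" "\<bar>h 1\<bar> \<le> B" using B(2) s by auto
      thus ?thesis using abs_triangle_ineq4[of "h s" "h 1"] by linarith
    qed
    ultimately show ?thesis using e by linarith
  qed
  show ?thesis
  proof (intro exI[of _ K] conjI K allI impI)
    fix q t :: real and n :: nat
    assume q0: "0 < q" and q1: "q \<le> 1" and n: "1 \<le> n" and t0: "0 \<le> t" and t1: "t < 1"
    note W = wt_nonneg[OF q0 q1 t0 t1 n] wt_sums[OF q0 q1 t0 t1 n] nd_range[OF q0 q1 t0 t1 n]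
      wt_nd_sums[OF q0 q1 t0 t1 n]
    have sq: "(\<lambda>k. wt q n t k * (1 - nd q n k)) sums (1 - t)"
      using sums_diff[OF W(2) W(4)] by (simp add: algebra_simps)
    have "\<bar>(\<Sum>k. wt q n t k * h (nd q n k)) - h 1\<bar> \<le> e + K * (\<Sum>k. wt q n t k * (1 - nd q n k))"
    proof -
      have X: "\<And>s. s \<in> {0..1} \<Longrightarrow> \<bar>h s - h 1\<bar> \<le> e + K * (\<lambda>s. 1 - s) s"
        using pw by simp
      have Y: "\<And>s. s \<in> {0..1} \<Longrightarrow> \<bar>h s\<bar> \<le> B" using B(2) by blast
      have Z: "summable (\<lambda>k. wt q n t k * (\<lambda>s. 1 - s) (nd q n k))"
        using sums_summable[OF sq] by simp
      have "\<And>k. nd q n k \<in> {0..1}" using W(3) by simp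
      from wavg[OF W(1) W(2) this X Z Y] show ?thesis by simp
    qed
    thus "\<bar>(\<Sum>k. wt q n t k * h (nd q n k)) - h 1\<bar> \<le> e + K * (1 - t)" using sums_unique[OF sq] by simp
  qed
qed

end

lemma cc_series_summable:
  assumes q: "0 < q" "q \<le> 1" and t: "0 \<le> t" "t < 1" and g: "\<And>k. \<bar>g k\<bar> \<le> B"
  shows "summable (\<lambda>k. cc q n k * t ^ k * g k)"
proof -
  have s: "summable (\<lambda>k. B * (cc q n k * t ^ k))"
    by (rule summable_mult[OF sums_summable[OF A_sums[OF q t]]])
  have "norm (cc q n k * t ^ k * g k) \<le> B * (cc q n k * t ^ k)" for k
  proof -
    have "0 \<le> cc q n k * t ^ k" using cc_pos[OF q(1), of n k] t by simp
    hence "(cc q n k * t ^ k) * \<bar>g k\<bar> \<le> (cc q n k * t ^ k) * B" by (rule mult_left_mono[OF g[of k]])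
    moreover have "norm (cc q n k * t ^ k * g k) = (cc q n k * t ^ k) * \<bar>g k\<bar>"
      using \<open>0 \<le> cc q n k * t ^ k\<close> by (simp only: real_norm_def abs_mult[of "cc q n k * t ^ k"] abs_of_nonneg)
    ultimately show ?thesis by (simp add: mult.commute)
  qed
  thus ?thesis by (rule summable_comparison_test'[OF s, where N=0])
qed

context
  fixes x1 xN :: real and f :: "real \<Rightarrow> real" and q :: real and n :: nat
  assumes I: "x1 < xN" and q: "0 < q" "q \<le> 1" and n: "1 \<le> n"
    and fc: "continuous_on {x1..xN} f"
begin

definition hh :: "real \<Rightarrow> real" where "hh s = f (x1 + (xN - x1) * s)"

lemma hh_cont: "continuous_on {0..1} hh"
proof -
  have "continuous_on {0..1} (\<lambda>s. x1 + (xN - x1) * s)" by (intro continuous_intros)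
  moreover have "(\<lambda>s. x1 + (xN - x1) * s) ` {0..1} \<subseteq> {x1..xN}"
  proof
    fix y assume "y \<in> (\<lambda>s. x1 + (xN - x1) * s) ` {0..1}"
    then obtain s where s: "s \<in> {0..1}" "y = x1 + (xN - x1) * s" by auto
    have "(xN - x1) * s \<le> (xN - x1) * 1" using s I by (intro mult_left_mono) auto
    moreover have "0 \<le> (xN - x1) * s" using s I by simp
    ultimately show "y \<in> {x1..xN}" using s by auto
  qed
  ultimately show ?thesis unfolding hh_def using continuous_on_compose2[OF fc] by blast
qed

lemma hh_bound: "\<exists>B. \<forall>s\<in>{0..1}. \<bar>hh s\<bar> \<le> B"
  using h_bound[OF hh_cont] by blast

lemma mkzP_eq: "mkzP x1 xN n q x = PP q n ((x - x1) / (xN - x1))"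
proof -
  have L: "xN - x1 \<noteq> 0" using I by simp
  have "PP q n ((x - x1) / (xN - x1)) = (\<Prod>j\<in>{0..n}. (xN - x1 - q ^ j * (x - x1)) / (xN - x1))"
    unfolding PP_def using L by (intro prod.cong) (auto simp: field_simps)
  also have "\<dots> = (\<Prod>j\<in>{0..n}. (xN - x1 - q ^ j * (x - x1))) / (xN - x1) ^ (n + 1)"
    by (simp add: prod_dividef)
  finally show ?thesis by (simp add: mkzP_def)
qed

lemma mkz_eq:
  assumes x: "x1 \<le> x" "x < xN"
  shows "mkz x1 xN n q f x = (\<Sum>k. wt q n ((x - x1) / (xN - x1)) k * hh (nd q n k))"
proof -
  define t where "t = (x - x1) / (xN - x1)"
  have t: "0 \<le> t" "t < 1" using x I by (auto simp: t_def divide_simps)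
  obtain B where B: "\<forall>s\<in>{0..1}. \<bar>hh s\<bar> \<le> B" using hh_bound by blast
  have gb: "\<bar>hh (nd q n k)\<bar> \<le> B" for k using B nd_range[OF q t n, of k] by auto
  have sm: "summable (\<lambda>k. cc q n k * t ^ k * hh (nd q n k))"
    by (rule cc_series_summable[OF q t gb])
  have "mkz x1 xN n q f x = PP q n t * (\<Sum>k. cc q n k * t ^ k * hh (nd q n k))"
    using x by (simp add: mkz_def mkzP_eq t_def hh_def nd_def cc_def)
  also have "\<dots> = (\<Sum>k. PP q n t * (cc q n k * t ^ k * hh (nd q n k)))"
    by (rule suminf_mult[OF sm, symmetric])
  also have "\<dots> = (\<Sum>k. wt q n t k * hh (nd q n k))" by (simp add: wt_def mult.assoc)
  finally show ?thesis by (simp add: t_def)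
qed

lemma mkz_x1: "mkz x1 xN n q f x1 = f x1"
proof -
  have t: "0 \<le> (0::real)" "(0::real) < 1" by auto
  have "(\<lambda>k. wt q n 0 (Suc k) * hh (nd q n (Suc k))) sums 0" by (simp add: wt_def)
  from sums_Suc[OF this] have "(\<lambda>k. wt q n 0 k * hh (nd q n k)) sums (hh 0)"
    using q by (simp add: wt_def nd_0[OF q t n] PP_def)
  hence "(\<Sum>k. wt q n 0 k * hh (nd q n k)) = f x1" by (simp add: sums_unique[symmetric] hh_def)
  thus ?thesis using mkz_eq[of x1] I by simp
qed

lemma mkz_xN: "mkz x1 xN n q f xN = f xN" by (simp add: mkz_def)

lemma mkz_cont: "continuous_on {x1..xN} (mkz x1 xN n q f)"
proof -
  obtain B where B: "\<forall>s\<in>{0..1}. \<bar>hh s\<bar> \<le> B" using hh_bound by blast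
  define c where "c = (\<lambda>k. cc q n k * hh (nd q n k))"
  define S where "S = (\<lambda>t. \<Sum>k. c k * t ^ k)"
  define G0 where "G0 = (\<lambda>x. PP q n ((x - x1) / (xN - x1)) * S ((x - x1) / (xN - x1)))"
  have Scont: "isCont S t" if t: "0 \<le> t" "t < 1" for t
  proof -
    define K where "K = (1 + t) / 2"
    have K: "0 \<le> K" "K < 1" using t by (auto simp: K_def)
    have gb: "\<bar>hh (nd q n k)\<bar> \<le> B" for k using B nd_range[OF q K n, of k] by auto
    have "summable (\<lambda>k. c k * K ^ k)"
      using cc_series_summable[OF q K gb] by (simp add: c_def mult_ac)
    moreover have "norm t < norm K" using t by (simp add: K_def)
    ultimately show ?thesis unfolding S_def by (rule isCont_powser)
  qed
  have G0eq: "mkz x1 xN n q f x = G0 x" if x: "x1 \<le> x" "x < xN" for x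
  proof -
    define t where "t = (x - x1) / (xN - x1)"
    have t: "0 \<le> t" "t < 1" using x I by (auto simp: t_def divide_simps)
    have gb: "\<bar>hh (nd q n k)\<bar> \<le> B" for k using B nd_range[OF q t n, of k] by auto
    have sm: "summable (\<lambda>k. cc q n k * t ^ k * hh (nd q n k))"
      by (rule cc_series_summable[OF q t gb])
    have "mkz x1 xN n q f x = (\<Sum>k. PP q n t * (cc q n k * t ^ k * hh (nd q n k)))"
      using mkz_eq[OF x] by (simp add: wt_def t_def mult.assoc)
    also have "\<dots> = PP q n t * (\<Sum>k. cc q n k * t ^ k * hh (nd q n k))"
      by (rule suminf_mult[OF sm])
    also have "\<dots> = G0 x" by (simp add: G0_def S_def c_def t_def mult_ac)
    finally show ?thesis .
  qed
  have G0cont: "isCont G0 x" if x: "x1 \<le> x" "x < xN" for x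
  proof -
    define t where "t = (x - x1) / (xN - x1)"
    have t: "0 \<le> t" "t < 1" using x I by (auto simp: t_def divide_simps)
    have c1: "isCont (\<lambda>x. (x - x1) / (xN - x1)) x" using I by (intro continuous_intros) auto
    have "isCont (\<lambda>x. S ((x - x1) / (xN - x1))) x"
      using continuous_at_compose[OF c1, of S] Scont[OF t] by (simp add: t_def o_def)
    moreover have "isCont (\<lambda>x. PP q n ((x - x1) / (xN - x1))) x"
      unfolding PP_def using I by (intro continuous_intros) auto
    ultimately show ?thesis unfolding G0_def by (intro continuous_intros)
  qed
  show ?thesis unfolding continuous_on_eq_continuous_within
  proof
    fix x assume xI: "x \<in> {x1..xN}"
    show "continuous (at x within {x1..xN}) (mkz x1 xN n q f)"
    proof (cases "x < xN")
      case True
      have "(G0 \<longlongrightarrow> G0 x) (at x within {x1..xN})"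
        using G0cont[of x] True xI by (simp add: isCont_def tendsto_within_subset[OF _ subset_UNIV])
      hence "(mkz x1 xN n q f \<longlongrightarrow> G0 x) (at x within {x1..xN})"
      proof (rule Lim_transform_within[where d="xN - x"])
        show "0 < xN - x" using True by simp
        fix x' assume "x' \<in> {x1..xN}" "0 < dist x' x" "dist x' x < xN - x"
        hence "x1 \<le> x'" "x' < xN" by (auto simp: dist_real_def)
        thus "G0 x' = mkz x1 xN n q f x'" using G0eq by simp
      qed
      thus ?thesis using G0eq[of x] True xI by (simp add: continuous_within)
    next
      case False
      hence xN: "x = xN" using xI by simp
      have "(mkz x1 xN n q f \<longlongrightarrow> f xN) (at xN within {x1..xN})"
      proof (rule tendstoI)
        fix e :: real assume e: "0 < e"
        obtain K where K: "0 \<le> K" and Kb: "\<forall>q n t. 0 < q \<longrightarrow> q \<le> 1 \<longrightarrow> 1 \<le> n \<longrightarrow> 0 \<le> t \<longrightarrow> t < 1 \<longrightarrow>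
           \<bar>(\<Sum>k. wt q n t k * hh (nd q n k)) - hh 1\<bar> \<le> e / 2 + K * (1 - t)"
          using approx_end[OF hh_cont, of "e / 2"] e by auto
        define d where "d = (e / 2) * (xN - x1) / (K + 1)"
        have d: "0 < d" using e I K by (simp add: d_def)
        show "\<forall>\<^sub>F y in at xN within {x1..xN}. dist (mkz x1 xN n q f y) (f xN) < e"
          unfolding eventually_at
        proof (intro exI[of _ d] conjI d ballI impI)
          fix y assume y: "y \<in> {x1..xN}" and yd: "y \<noteq> xN \<and> dist y xN < d"
          hence y1: "x1 \<le> y" "y < xN" by auto
          define t where "t = (y - x1) / (xN - x1)"
          have t: "0 \<le> t" "t < 1" using y1 I by (auto simp: t_def divide_simps)
          have "1 - t = (xN - y) / (xN - x1)" using I by (simp add: t_def field_simps)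
          also have "\<dots> < d / (xN - x1)" using yd y1 I by (simp add: dist_real_def divide_strict_right_mono)
          also have "\<dots> = (e / 2) / (K + 1)"
          proof -
            have "K + 1 \<noteq> 0" "xN - x1 \<noteq> 0" using I K by auto
            thus ?thesis by (simp add: d_def)
          qed
          finally have "K * (1 - t) \<le> K * ((e / 2) / (K + 1))" using K by (intro mult_left_mono) auto
          also have "\<dots> < e / 2" using K e by (simp add: field_simps)
          finally have Kt: "K * (1 - t) < e / 2" .
          have "\<bar>mkz x1 xN n q f y - hh 1\<bar> \<le> e / 2 + K * (1 - t)"
            using Kb q n t mkz_eq[OF y1] by (simp add: t_def)
          moreover have "hh 1 = f xN" by (simp add: hh_def)
          ultimately show "dist (mkz x1 xN n q f y) (f xN) < e" using Kt by (simp add: dist_real_def)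
        qed
      qed
      thus ?thesis using xN by (simp add: continuous_within mkz_xN)
    qed
  qed
qed

end

context
  fixes x :: "nat \<Rightarrow> real" and N :: nat and a b :: "nat \<Rightarrow> real"
  assumes N: "N \<ge> 2"
    and part: "\<And>i. i \<in> {1..<N} \<Longrightarrow> x i < x (i + 1)"
    and u1: "\<And>i. i \<in> {1..N-1} \<Longrightarrow> a i * x 1 + b i = x i"
    and uN: "\<And>i. i \<in> {1..N-1} \<Longrightarrow> a i * x N + b i = x (i + 1)"
begin

lemma x_mono_aux: "1 \<le> i \<Longrightarrow> i + d \<le> N \<Longrightarrow> x i \<le> x (i + d)"
proof (induction d)
  case 0 thus ?case by simp
next
  case (Suc d)
  hence "x i \<le> x (i + d)" by simp
  moreover have "x (i + d) < x (i + d + 1)" using part[of "i + d"] Suc.prems by auto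
  ultimately show ?case by simp
qed

lemma x_mono: "1 \<le> i \<Longrightarrow> i \<le> j \<Longrightarrow> j \<le> N \<Longrightarrow> x i \<le> x j"
  using x_mono_aux[of i "j - i"] by simp

lemma x1N: "x 1 < x N"
proof -
  have "x 1 < x (1 + 1)" using part[of 1] N by auto
  hence "x 1 < x 2" by (simp add: numeral_2_eq_2)
  moreover have "x 2 \<le> x N" using x_mono[of 2 N] N by auto
  ultimately show ?thesis by simp
qed

lemma a_pos: "i \<in> {1..N-1} \<Longrightarrow> 0 < a i"
proof -
  assume i: "i \<in> {1..N-1}"
  have "a i * (x N - x 1) = x (i + 1) - x i" using u1[OF i] uN[OF i] by (simp add: algebra_simps)
  moreover have "x i < x (i + 1)" using part[of i] i N by auto
  ultimately have "0 < a i * (x N - x 1)" by simp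
  thus ?thesis using x1N by (simp add: zero_less_mult_iff)
qed

lemma piece_sub: "i \<in> {1..N-1} \<Longrightarrow> {x i..x (i+1)} \<subseteq> {x 1..x N}"
  using x_mono[of 1 i] x_mono[of "i+1" N] N by auto

lemma u_piece: "i \<in> {1..N-1} \<Longrightarrow> y \<in> {x 1..x N} \<Longrightarrow> a i * y + b i \<in> {x i..x (i+1)}"
proof -
  assume i: "i \<in> {1..N-1}" and y: "y \<in> {x 1..x N}"
  have "a i * x 1 \<le> a i * y" "a i * y \<le> a i * x N" using a_pos[OF i] y by auto
  thus ?thesis using u1[OF i] uN[OF i] by auto
qed

lemma u_I: "i \<in> {1..N-1} \<Longrightarrow> y \<in> {x 1..x N} \<Longrightarrow> a i * y + b i \<in> {x 1..x N}"
  using u_piece piece_sub by blast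

definition vv :: "nat \<Rightarrow> real \<Rightarrow> real" where "vv i z = (z - b i) / a i"

lemma vv_u: "i \<in> {1..N-1} \<Longrightarrow> vv i (a i * y + b i) = y"
  using a_pos[of i] by (simp add: vv_def)

lemma u_vv: "i \<in> {1..N-1} \<Longrightarrow> a i * vv i z + b i = z"
  using a_pos[of i] by (simp add: vv_def)

lemma vv_I: "i \<in> {1..N-1} \<Longrightarrow> z \<in> {x i..x (i+1)} \<Longrightarrow> vv i z \<in> {x 1..x N}"
proof -
  assume i: "i \<in> {1..N-1}" and z: "z \<in> {x i..x (i+1)}"
  have "a i * x 1 \<le> a i * vv i z" "a i * vv i z \<le> a i * x N"
    using u_vv[OF i, of z] u1[OF i] uN[OF i] z by auto
  thus ?thesis using a_pos[OF i] by (auto simp: mult_le_cancel_left_pos)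
qed

lemma vv_x1: "i \<in> {1..N-1} \<Longrightarrow> vv i (x i) = x 1"
  using vv_u[of i "x 1"] u1[of i] by simp

lemma vv_xN: "i \<in> {1..N-1} \<Longrightarrow> vv i (x (i+1)) = x N"
  using vv_u[of i "x N"] uN[of i] by simp

lemma cover_aux: "1 \<le> m \<Longrightarrow> m \<le> N \<Longrightarrow> x 1 \<le> z \<Longrightarrow> z \<le> x m \<Longrightarrow>
   (m = 1 \<and> z = x 1) \<or> (\<exists>i. 1 \<le> i \<and> i < m \<and> x i \<le> z \<and> z \<le> x (i+1))"
proof (induction m)
  case 0 thus ?case by simp
next
  case (Suc m)
  show ?case
  proof (cases "m = 0")
    case True thus ?thesis using Suc.prems by simp
  next
    case False
    show ?thesis
    proof (cases "z \<le> x m")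
      case True
      from Suc.IH[OF _ _ Suc.prems(3) True] False Suc.prems
      have "(m = 1 \<and> z = x 1) \<or> (\<exists>i. 1 \<le> i \<and> i < m \<and> x i \<le> z \<and> z \<le> x (i+1))" by auto
      thus ?thesis
      proof
        assume "m = 1 \<and> z = x 1"
        thus ?thesis using part[of 1] Suc.prems by auto
      next
        assume "\<exists>i. 1 \<le> i \<and> i < m \<and> x i \<le> z \<and> z \<le> x (i+1)"
        thus ?thesis by auto
      qed
    next
      case False2: False
      thus ?thesis using Suc.prems False by (intro disjI2 exI[of _ m]) auto
    qed
  qed
qed

lemma cover: "z \<in> {x 1..x N} \<Longrightarrow> \<exists>i\<in>{1..N-1}. z \<in> {x i..x (i+1)}"
proof -
  assume z: "z \<in> {x 1..x N}"
  from cover_aux[of N z] z N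
  have "(N = 1 \<and> z = x 1) \<or> (\<exists>i. 1 \<le> i \<and> i < N \<and> x i \<le> z \<and> z \<le> x (i+1))" by auto
  thus ?thesis using N by auto
qed

lemma I_Union: "{x 1..x N} = (\<Union>i\<in>{1..N-1}. {x i..x (i+1)})"
  using cover piece_sub by blast

lemma pieces_meet:
  assumes i: "i \<in> {1..N-1}" and j: "j \<in> {1..N-1}" and ij: "i < j"
    and zi: "z \<in> {x i..x (i+1)}" and zj: "z \<in> {x j..x (j+1)}"
  shows "z = x (i+1) \<and> z = x j"
proof -
  have "x (i+1) \<le> x j" using x_mono[of "i+1" j] i j ij by auto
  thus ?thesis using zi zj by auto
qed

context
  fixes f F :: "real \<Rightarrow> real" and \<alpha> :: "nat \<Rightarrow> real \<Rightarrow> real" and s :: real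
  assumes fc: "continuous_on {x 1..x N} f"
    and Fc: "continuous_on {x 1..x N} F"
    and F1: "F (x 1) = f (x 1)" and FN: "F (x N) = f (x N)"
    and \<alpha>c: "\<And>i. i \<in> {1..N-1} \<Longrightarrow> continuous_on {x 1..x N} (\<alpha> i)"
    and \<alpha>s: "\<And>i y. i \<in> {1..N-1} \<Longrightarrow> y \<in> {x 1..x N} \<Longrightarrow> \<bar>\<alpha> i y\<bar> \<le> s"
    and s1: "s < 1"
begin

abbreviation "II \<equiv> {x 1..x N}"


definition fixeq :: "(real \<Rightarrow> real) \<Rightarrow> bool" where
  "fixeq G \<longleftrightarrow> (\<forall>i\<in>{1..N-1}. \<forall>y\<in>II. G (a i * y + b i) = f (a i * y + b i) + \<alpha> i y * (G y - F y))"

lemmas G = x1N a_pos piece_sub u_piece u_I vv_u u_vv vv_I vv_x1 vv_xN cover I_Union pieces_meet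

lemma s0: "0 \<le> s"
proof -
  have "1 \<in> {1..N-1}" using N by auto
  moreover have "x 1 \<in> II" using G(1) by auto
  ultimately show ?thesis using \<alpha>s[of 1 "x 1"] by (meson abs_ge_zero order_trans)
qed

lemma IIne: "II \<noteq> {}" using G(1) by auto

lemma preimage: "z \<in> II \<Longrightarrow> \<exists>i\<in>{1..N-1}. \<exists>y\<in>II. z = a i * y + b i"
proof -
  assume "z \<in> II"
  then obtain i where i: "i \<in> {1..N-1}" "z \<in> {x i..x (i+1)}" using G(11) by blast
  thus ?thesis using G(8)[OF i] G(7)[OF i(1), of z] by metis
qed

lemma fix_bound:
  assumes Gc: "continuous_on II Gf" and eq: "fixeq Gf"
    and E: "\<And>y. y \<in> II \<Longrightarrow> \<bar>f y - F y\<bar> \<le> E"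
  shows "\<And>z. z \<in> II \<Longrightarrow> \<bar>Gf z - f z\<bar> \<le> s * E / (1 - s)"
proof -
  have "continuous_on II (\<lambda>z. \<bar>Gf z - f z\<bar>)" by (intro continuous_intros Gc fc)
  then obtain z0 where z0: "z0 \<in> II" "\<forall>z\<in>II. \<bar>Gf z - f z\<bar> \<le> \<bar>Gf z0 - f z0\<bar>"
    using continuous_attains_sup[OF compact_Icc IIne] by blast
  obtain i y where iy: "i \<in> {1..N-1}" "y \<in> II" "z0 = a i * y + b i" using preimage[OF z0(1)] by blast
  define D where "D = \<bar>Gf z0 - f z0\<bar>"
  have "D = \<bar>\<alpha> i y\<bar> * \<bar>Gf y - F y\<bar>" using eq iy by (simp add: fixeq_def D_def abs_mult)
  also have "\<dots> \<le> s * \<bar>Gf y - F y\<bar>" using \<alpha>s[OF iy(1,2)] by (rule mult_right_mono) simp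
  also have "\<bar>Gf y - F y\<bar> \<le> D + E"
  proof -
    have "\<bar>Gf y - f y\<bar> \<le> D" using z0(2) iy(2) D_def by simp
    thus ?thesis using E[OF iy(2)] by linarith
  qed
  hence "s * \<bar>Gf y - F y\<bar> \<le> s * (D + E)" using s0 by (rule mult_left_mono)
  finally have "D * (1 - s) \<le> s * E" by (simp add: algebra_simps)
  hence DD: "D \<le> s * E / (1 - s)" using s1 by (simp add: field_simps)
  fix z assume "z \<in> II"
  thus "\<bar>Gf z - f z\<bar> \<le> s * E / (1 - s)" using z0(2) DD D_def by fastforce
qed

lemma fix_unique:
  assumes G1c: "continuous_on II G1" and eq1: "fixeq G1"
    and G2c: "continuous_on II G2" and eq2: "fixeq G2"
  shows "\<And>z. z \<in> II \<Longrightarrow> G1 z = G2 z"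
proof -
  have "continuous_on II (\<lambda>z. \<bar>G1 z - G2 z\<bar>)" by (intro continuous_intros G1c G2c)
  then obtain z0 where z0: "z0 \<in> II" "\<forall>z\<in>II. \<bar>G1 z - G2 z\<bar> \<le> \<bar>G1 z0 - G2 z0\<bar>"
    using continuous_attains_sup[OF compact_Icc IIne] by blast
  obtain i y where iy: "i \<in> {1..N-1}" "y \<in> II" "z0 = a i * y + b i" using preimage[OF z0(1)] by blast
  define D where "D = \<bar>G1 z0 - G2 z0\<bar>"
  have e1: "G1 z0 = f z0 + \<alpha> i y * (G1 y - F y)" using eq1 iy unfolding fixeq_def by auto
  have e2: "G2 z0 = f z0 + \<alpha> i y * (G2 y - F y)" using eq2 iy unfolding fixeq_def by auto
  have "G1 z0 - G2 z0 = \<alpha> i y * (G1 y - G2 y)" unfolding e1 e2 by (simp add: algebra_simps)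
  hence "D = \<bar>\<alpha> i y\<bar> * \<bar>G1 y - G2 y\<bar>" by (simp add: D_def abs_mult)
  also have "\<dots> \<le> s * \<bar>G1 y - G2 y\<bar>" using \<alpha>s[OF iy(1,2)] by (rule mult_right_mono) simp
  also have "\<dots> \<le> s * D" using z0(2) iy(2) s0 D_def by (simp add: mult_left_mono)
  finally have "D * (1 - s) \<le> 0" by (simp add: algebra_simps)
  moreover have "0 < 1 - s" using s1 by simp
  ultimately have "D \<le> 0" by (simp add: mult_le_0_iff)
  fix z assume "z \<in> II"
  thus "G1 z = G2 z" using z0(2) \<open>D \<le> 0\<close> D_def by fastforce
qed

lemma fix_pos:
  fixes g :: "real \<Rightarrow> real" and Phi phig :: real and phi :: "nat \<Rightarrow> real"
  assumes Gc: "continuous_on II Gf" and eq: "fixeq Gf" and gc: "continuous_on II g"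
    and \<alpha>0: "\<And>i y. i \<in> {1..N-1} \<Longrightarrow> y \<in> II \<Longrightarrow> 0 \<le> \<alpha> i y"
    and \<alpha>phi: "\<And>i y. i \<in> {1..N-1} \<Longrightarrow> y \<in> II \<Longrightarrow> \<alpha> i y * (Phi - phig) \<le> phi i"
    and phi: "\<And>i y. i \<in> {1..N-1} \<Longrightarrow> y \<in> II \<Longrightarrow> phi i \<le> f (a i * y + b i) - g (a i * y + b i)"
    and Phi: "\<And>y. y \<in> II \<Longrightarrow> F y \<le> Phi"
    and phig: "\<And>y. y \<in> II \<Longrightarrow> phig \<le> g y"
  shows "\<And>z. z \<in> II \<Longrightarrow> g z \<le> Gf z"
proof -
  have "continuous_on II (\<lambda>z. Gf z - g z)" by (intro continuous_intros Gc gc)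
  then obtain z0 where z0: "z0 \<in> II" "\<forall>z\<in>II. Gf z0 - g z0 \<le> Gf z - g z"
    using continuous_attains_inf[OF compact_Icc IIne] by blast
  obtain i y where iy: "i \<in> {1..N-1}" "y \<in> II" "z0 = a i * y + b i" using preimage[OF z0(1)] by blast
  define m where "m = Gf z0 - g z0"
  have my: "m \<le> Gf y - g y" using z0(2) iy(2) m_def by simp
  have "m = f z0 - g z0 + \<alpha> i y * (Gf y - F y)" using eq iy by (simp add: fixeq_def m_def)
  also have "\<alpha> i y * (Gf y - F y) \<ge> \<alpha> i y * ((phig + m) - Phi)"
    using \<alpha>0[OF iy(1,2)] Phi[OF iy(2)] phig[OF iy(2)] my by (intro mult_left_mono) auto
  hence "f z0 - g z0 + \<alpha> i y * (Gf y - F y) \<ge> phi i + \<alpha> i y * ((phig + m) - Phi)"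
    using phi[OF iy(1,2)] unfolding iy(3) by linarith
  finally have "m \<ge> phi i - \<alpha> i y * (Phi - phig) + \<alpha> i y * m" by (simp add: algebra_simps)
  hence m1: "m \<ge> \<alpha> i y * m" using \<alpha>phi[OF iy(1,2)] by linarith
  have "0 \<le> m"
  proof (rule ccontr)
    assume "\<not> 0 \<le> m"
    hence mn: "m < 0" by simp
    have "\<alpha> i y \<le> s" using \<alpha>s[OF iy(1,2)] by simp
    hence "s * m \<le> \<alpha> i y * m" using mn by (intro mult_right_mono_neg) auto
    moreover have "m < s * m" using mn s1 by (simp add: mult_less_cancel_right_neg)
    ultimately show False using m1 by linarith
  qed
  fix z assume "z \<in> II"
  thus "g z \<le> Gf z" using z0(2) \<open>0 \<le> m\<close> m_def by fastforce
qed


lemma ev_cont: "continuous_on UNIV (\<lambda>H::real \<Rightarrow>\<^sub>C real. apply_bcontfun H p)"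
proof (rule lipschitz_on_continuous_on)
  show "1-lipschitz_on UNIV (\<lambda>H::real \<Rightarrow>\<^sub>C real. apply_bcontfun H p)"
    by (rule lipschitz_onI) (auto simp: dist_bounded)
qed

definition cl :: "real \<Rightarrow> real" where "cl z = max (x 1) (min (x N) z)"

lemma cl_cont: "continuous_on UNIV cl" unfolding cl_def by (intro continuous_intros)
lemma cl_I: "cl z \<in> II" using G(1) by (auto simp: cl_def)
lemma cl_id: "z \<in> II \<Longrightarrow> cl z = z" by (auto simp: cl_def)

lemma bcf: "continuous_on II g \<Longrightarrow> (\<lambda>z. g (cl z)) \<in> bcontfun"
proof -
  assume gc: "continuous_on II g"
  have "continuous_on UNIV (\<lambda>z. g (cl z))"
    by (rule continuous_on_compose2[OF gc cl_cont]) (use cl_I in auto)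
  moreover have "bounded (g ` II)" by (rule compact_imp_bounded[OF compact_continuous_image[OF gc compact_Icc]])
  hence "bounded (range (\<lambda>z. g (cl z)))" by (rule bounded_subset) (use cl_I in auto)
  ultimately show ?thesis by (simp add: bcontfun_def)
qed

definition form :: "(real \<Rightarrow> real) \<Rightarrow> nat \<Rightarrow> real \<Rightarrow> real" where
  "form H i z = f z + \<alpha> i (vv i z) * (H (vv i z) - F (vv i z))"

definition TT :: "(real \<Rightarrow> real) \<Rightarrow> real \<Rightarrow> real" where
  "TT H z = (SOME w. \<exists>i\<in>{1..N-1}. z \<in> {x i..x (i+1)} \<and> w = form H i z)"

lemma form_end:
  assumes H1: "H (x 1) = f (x 1)" and HN: "H (x N) = f (x N)" and i: "i \<in> {1..N-1}"
  shows "form H i (x i) = f (x i)" "form H i (x (i+1)) = f (x (i+1))"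
  using G(9)[OF i] G(10)[OF i] H1 HN F1 FN by (auto simp: form_def)

lemma form_agree:
  assumes H1: "H (x 1) = f (x 1)" and HN: "H (x N) = f (x N)"
    and i: "i \<in> {1..N-1}" and j: "j \<in> {1..N-1}"
    and zi: "z \<in> {x i..x (i+1)}" and zj: "z \<in> {x j..x (j+1)}"
  shows "form H i z = form H j z"
proof -
  have "i < j \<or> i = j \<or> j < i" by arith
  thus ?thesis
  proof (elim disjE)
    assume ij: "i < j"
    from G(13)[OF i j ij zi zj] have "z = x (i+1)" "z = x j" by auto
    thus ?thesis using form_end[OF H1 HN i] form_end[OF H1 HN j] by simp
  next
    assume "i = j" thus ?thesis by simp
  next
    assume ji: "j < i"
    from G(13)[OF j i ji zj zi] have "z = x (j+1)" "z = x i" by auto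
    thus ?thesis using form_end[OF H1 HN i] form_end[OF H1 HN j] by simp
  qed
qed

lemma TT_eq:
  assumes H1: "H (x 1) = f (x 1)" and HN: "H (x N) = f (x N)"
    and i: "i \<in> {1..N-1}" and zi: "z \<in> {x i..x (i+1)}"
  shows "TT H z = form H i z"
  unfolding TT_def
proof (rule some_equality)
  show "\<exists>j\<in>{1..N-1}. z \<in> {x j..x (j+1)} \<and> form H i z = form H j z" using i zi by blast
next
  fix w assume "\<exists>j\<in>{1..N-1}. z \<in> {x j..x (j+1)} \<and> w = form H j z"
  then obtain j where "j \<in> {1..N-1}" "z \<in> {x j..x (j+1)}" "w = form H j z" by blast
  thus "w = form H i z" using form_agree[OF H1 HN i _ zi] by metis
qed

lemma vv_cont: "i \<in> {1..N-1} \<Longrightarrow> continuous_on S (vv i)"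
  using G(2)[of i] unfolding vv_def by (intro continuous_intros) auto

lemma form_cont:
  assumes Hc: "continuous_on II H" and i: "i \<in> {1..N-1}"
  shows "continuous_on {x i..x (i+1)} (form H i)"
proof -
  have vI: "vv i ` {x i..x (i+1)} \<subseteq> II" using G(8)[OF i] by auto
  have c1: "continuous_on {x i..x (i+1)} (\<lambda>z. \<alpha> i (vv i z))"
    by (rule continuous_on_compose2[OF \<alpha>c[OF i] vv_cont[OF i] vI])
  have c2: "continuous_on {x i..x (i+1)} (\<lambda>z. H (vv i z))"
    by (rule continuous_on_compose2[OF Hc vv_cont[OF i] vI])
  have c3: "continuous_on {x i..x (i+1)} (\<lambda>z. F (vv i z))"
    by (rule continuous_on_compose2[OF Fc vv_cont[OF i] vI])
  have c4: "continuous_on {x i..x (i+1)} f" by (rule continuous_on_subset[OF fc G(3)[OF i]])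
  show ?thesis unfolding form_def by (intro continuous_intros c1 c2 c3 c4)
qed

lemma TT_cont:
  assumes Hc: "continuous_on II H" and H1: "H (x 1) = f (x 1)" and HN: "H (x N) = f (x N)"
  shows "continuous_on II (TT H)"
proof -
  have "continuous_on (\<Union>i\<in>{1..N-1}. {x i..x (i+1)}) (TT H)"
  proof (rule continuous_on_closed_Union)
    fix i assume i: "i \<in> {1..N-1}"
    show "continuous_on {x i..x (i+1)} (TT H)"
      using form_cont[OF Hc i] by (rule continuous_on_cong[THEN iffD1, rotated 2]) (auto simp: TT_eq[OF H1 HN i])
  qed auto
  thus ?thesis using G(12) by simp
qed

lemma TT_ends:
  assumes H1: "H (x 1) = f (x 1)" and HN: "H (x N) = f (x N)"
  shows "TT H (x 1) = f (x 1)" "TT H (x N) = f (x N)"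
proof -
  have i1: "1 \<in> {1..N-1}" using N by auto
  have "x 1 \<in> {x 1..x (1+1)}" using G(3)[OF i1] G(1) part[of 1] N by auto
  thus "TT H (x 1) = f (x 1)" using TT_eq[OF H1 HN i1] form_end[OF H1 HN i1] by simp
  have iN: "N - 1 \<in> {1..N-1}" using N by auto
  have e: "N - 1 + 1 = N" using N by simp
  have "x (N - 1) < x (N - 1 + 1)" using part[of "N-1"] N by auto
  hence "x N \<in> {x (N-1)..x (N - 1 + 1)}" unfolding e by auto
  thus "TT H (x N) = f (x N)" using TT_eq[OF H1 HN iN] form_end(2)[OF H1 HN iN] unfolding e by simp
qed

lemma fix_exists: "\<exists>Gf. continuous_on II Gf \<and> (\<forall>y. y \<notin> II \<longrightarrow> Gf y = 0) \<and> fixeq Gf"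
proof -
  define S where "S = {H :: real \<Rightarrow>\<^sub>C real. apply_bcontfun H (x 1) = f (x 1) \<and> apply_bcontfun H (x N) = f (x N)}"
  define Phi where "Phi = (\<lambda>H :: real \<Rightarrow>\<^sub>C real. Bcontfun (\<lambda>z. TT (apply_bcontfun H) (cl z)))"
  have PhiS: "H \<in> S \<Longrightarrow> apply_bcontfun (Phi H) = (\<lambda>z. TT (apply_bcontfun H) (cl z))" for H
  proof -
    assume "H \<in> S"
    hence "continuous_on II (TT (apply_bcontfun H))"
      by (intro TT_cont) (auto simp: S_def)
    thus ?thesis unfolding Phi_def by (intro Bcontfun_inverse bcf)
  qed
  have cS: "complete S"
  proof -
    have "closed S" unfolding S_def Collect_conj_eq
      by (intro closed_Int closed_Collect_eq ev_cont continuous_on_const)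
    thus ?thesis by (simp add: complete_eq_closed)
  qed
  have neS: "S \<noteq> {}"
  proof -
    have "apply_bcontfun (Bcontfun (\<lambda>z. f (cl z))) = (\<lambda>z. f (cl z))" by (intro Bcontfun_inverse bcf fc)
    hence "Bcontfun (\<lambda>z. f (cl z)) \<in> S" unfolding S_def using cl_id G(1) by auto
    thus ?thesis by blast
  qed
  have PS: "Phi ` S \<subseteq> S"
  proof
    fix K assume "K \<in> Phi ` S"
    then obtain H where H: "H \<in> S" "K = Phi H" by blast
    have "TT (apply_bcontfun H) (x 1) = f (x 1)" "TT (apply_bcontfun H) (x N) = f (x N)"
      using TT_ends[of "apply_bcontfun H"] H(1) by (auto simp: S_def)
    thus "K \<in> S" using PhiS[OF H(1)] H(2) cl_id G(1) by (auto simp: S_def)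
  qed
  have lip: "dist (Phi H1) (Phi H2) \<le> s * dist H1 H2" if H: "H1 \<in> S" "H2 \<in> S" for H1 H2
  proof (rule dist_bound)
    fix z
    obtain i where i: "i \<in> {1..N-1}" "cl z \<in> {x i..x (i+1)}" using G(11)[OF cl_I] by blast
    define v where "v = vv i (cl z)"
    have vI: "v \<in> II" using G(8)[OF i] v_def by simp
    have e1: "TT (apply_bcontfun H1) (cl z) = form (apply_bcontfun H1) i (cl z)"
      using H(1) i by (intro TT_eq) (auto simp: S_def)
    have e2: "TT (apply_bcontfun H2) (cl z) = form (apply_bcontfun H2) i (cl z)"
      using H(2) i by (intro TT_eq) (auto simp: S_def)
    have "dist (Phi H1 z) (Phi H2 z) = \<bar>\<alpha> i v\<bar> * \<bar>H1 v - H2 v\<bar>"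
      unfolding PhiS[OF H(1)] PhiS[OF H(2)] e1 e2 dist_real_def form_def v_def[symmetric]
      by (simp add: abs_mult[symmetric] algebra_simps)
    also have "\<dots> \<le> s * \<bar>H1 v - H2 v\<bar>" using \<alpha>s[OF i(1) vI] by (rule mult_right_mono) simp
    also have "\<dots> \<le> s * dist H1 H2"
      using dist_bounded[of H1 v H2] s0 by (intro mult_left_mono) (auto simp: dist_real_def)
    finally show "dist (Phi H1 z) (Phi H2 z) \<le> s * dist H1 H2" .
  qed
  obtain H where H: "H \<in> S" "Phi H = H" using Banach_fix[OF cS neS s0 s1 PS lip] by blast
  have Hfix: "TT (apply_bcontfun H) z = H z" if "z \<in> II" for z
    using arg_cong[OF H(2), of "\<lambda>K. apply_bcontfun K z"] PhiS[OF H(1)] cl_id[OF that] by simp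
  define Gf where "Gf = (\<lambda>z. if z \<in> II then H z else 0)"
  have "continuous_on II Gf"
    by (rule continuous_on_cong[THEN iffD1, OF refl _ continuous_on_apply_bcontfun[of II H]])
       (simp add: Gf_def)
  moreover have "\<forall>y. y \<notin> II \<longrightarrow> Gf y = 0" by (simp add: Gf_def)
  moreover have "fixeq Gf" unfolding fixeq_def
  proof (intro ballI)
    fix i y assume i: "i \<in> {1..N-1}" and y: "y \<in> II"
    define z where "z = a i * y + b i"
    have zp: "z \<in> {x i..x (i+1)}" using G(4)[OF i y] z_def by simp
    hence zI: "z \<in> II" using G(3)[OF i] by auto
    have "Gf z = TT (apply_bcontfun H) z" using Hfix[OF zI] zI by (simp add: Gf_def)
    also have "\<dots> = form (apply_bcontfun H) i z" using H(1) i zp by (intro TT_eq) (auto simp: S_def)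
    also have "\<dots> = f z + \<alpha> i y * (Gf y - F y)"
      using G(6)[OF i, of y] y by (simp add: form_def z_def Gf_def)
    finally show "Gf (a i * y + b i) = f (a i * y + b i) + \<alpha> i y * (Gf y - F y)" by (simp add: z_def)
  qed
  ultimately show ?thesis by blast
qed

lemma fix_ex1: "\<exists>!Gf. continuous_on II Gf \<and> (\<forall>y. y \<notin> II \<longrightarrow> Gf y = 0) \<and> fixeq Gf"
proof (rule ex_ex1I)
  show "\<exists>Gf. continuous_on II Gf \<and> (\<forall>y. y \<notin> II \<longrightarrow> Gf y = 0) \<and> fixeq Gf" by (rule fix_exists)
next
  fix G1 G2
  assume 1: "continuous_on II G1 \<and> (\<forall>y. y \<notin> II \<longrightarrow> G1 y = 0) \<and> fixeq G1"
     and 2: "continuous_on II G2 \<and> (\<forall>y. y \<notin> II \<longrightarrow> G2 y = 0) \<and> fixeq G2"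
  show "G1 = G2"
  proof
    fix z show "G1 z = G2 z"
      using fix_unique[of G1 G2 z] 1 2 by (cases "z \<in> II") auto
  qed
qed

end

end

lemma qint_big:
  fixes q :: "nat \<Rightarrow> real"
  assumes q01: "\<And>n. 0 < q n \<and> q n \<le> 1" and qlim: "q \<longlonglongrightarrow> 1"
  shows "eventually (\<lambda>n. M \<le> qint (q n) n) sequentially"
proof -
  define m where "m = nat \<lceil>2 * M\<rceil>"
  have m: "2 * M \<le> real m" unfolding m_def by linarith
  have "(\<lambda>n. q n ^ m) \<longlonglongrightarrow> 1 ^ m" by (intro tendsto_power qlim)
  hence "eventually (\<lambda>n. 1 / 2 < q n ^ m) sequentially" by (rule order_tendstoD) simp
  moreover have "eventually (\<lambda>n. m \<le> n) sequentially" by (rule eventually_ge_at_top)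
  ultimately show ?thesis
  proof eventually_elim
    case (elim n)
    have q0: "0 < q n" and q1: "q n \<le> 1" using q01[of n] by auto
    have "real m * (1 / 2) \<le> real m * q n ^ m" using elim(1) by (intro mult_left_mono) auto
    also have "\<dots> = (\<Sum>j<m. q n ^ m)" by simp
    also have "\<dots> \<le> (\<Sum>j<m. q n ^ j)"
      by (rule sum_mono) (use q0 q1 in \<open>auto intro: power_decreasing\<close>)
    also have "\<dots> \<le> (\<Sum>j<n. q n ^ j)" using elim(2) q0 by (intro sum_mono2) auto
    also have "\<dots> = qint (q n) n" by (simp add: qint_sum)
    finally show ?case using m by linarith
  qed
qed

theorem theorem4p3:
  fixes x :: "nat \<Rightarrow> real" and N :: nat
    and a b :: "nat \<Rightarrow> real" and f g :: "real \<Rightarrow> real"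
    and q :: "nat \<Rightarrow> real" and \<alpha> :: "nat \<Rightarrow> real \<Rightarrow> real"
  assumes N: "N \<ge> 2"
    and part: "\<And>i. i \<in> {1..<N} \<Longrightarrow> x i < x (i + 1)"
    and u1: "\<And>i. i \<in> {1..N-1} \<Longrightarrow> a i * x 1 + b i = x i"
    and uN: "\<And>i. i \<in> {1..N-1} \<Longrightarrow> a i * x N + b i = x (i + 1)"
    and fc: "continuous_on {x 1..x N} f"
    and gc: "continuous_on {x 1..x N} g"
    and fg: "\<And>y. y \<in> {x 1..x N} \<Longrightarrow> g y \<le> f y"
    and q01: "\<And>n. 0 < q n \<and> q n \<le> 1"
    and qlim: "q \<longlonglongrightarrow> 1"
    and \<alpha>c: "\<And>i. i \<in> {1..N-1} \<Longrightarrow> continuous_on {x 1..x N} (\<alpha> i)"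
    and \<alpha>norm: "(MAX i\<in>{1..N-1}. SUP y\<in>{x 1..x N}. \<bar>\<alpha> i y\<bar>) < 1"
    and \<alpha>bound: "\<And>n i y. n \<ge> 1 \<Longrightarrow> i \<in> {1..N-1} \<Longrightarrow> y \<in> {x 1..x N} \<Longrightarrow>
        0 \<le> \<alpha> i y \<and>
        \<alpha> i y \<le> min ((INF t\<in>{x 1..x N}. f (a i * t + b i) - g (a i * t + b i)) /
                       ((SUP t\<in>{x 1..x N}. mkz (x 1) (x N) n (q n) f t) -
                        (INF t\<in>{x 1..x N}. g t))) 1"
  shows "(\<forall>n\<ge>1. \<forall>y\<in>{x 1..x N}.
            mkz_fractal (x 1) (x N) N (\<lambda>i t. a i * t + b i) \<alpha> n (q n) f y \<ge> g y)
       \<and> uniform_limit {x 1..x N}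
            (\<lambda>n. mkz_fractal (x 1) (x N) N (\<lambda>i t. a i * t + b i) \<alpha> n (q n) f) f sequentially"
proof -
  note geo = N part u1 uN
  have x1N: "x 1 < x N" by (rule x1N[where x=x and N=N and a=a and b=b]) (fact geo)+
  have uI: "a i * t + b i \<in> {x 1..x N}" if "i \<in> {1..N-1}" "t \<in> {x 1..x N}" for i t
    by (rule u_I[where x=x and N=N and a=a and b=b]) (fact geo that)+
  have Ine: "{x 1..x N} \<noteq> {}" using x1N by auto
  define s where "s = (MAX i\<in>{1..N-1}. SUP y\<in>{x 1..x N}. \<bar>\<alpha> i y\<bar>)"
  have s1: "s < 1" using \<alpha>norm s_def by simp
  have \<alpha>s: "\<bar>\<alpha> i y\<bar> \<le> s" if i: "i \<in> {1..N-1}" and y: "y \<in> {x 1..x N}" for i y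
  proof -
    have "continuous_on {x 1..x N} (\<lambda>y. \<bar>\<alpha> i y\<bar>)" by (intro continuous_intros \<alpha>c[OF i])
    hence "bounded ((\<lambda>y. \<bar>\<alpha> i y\<bar>) ` {x 1..x N})"
      by (intro compact_imp_bounded compact_continuous_image) auto
    hence "bdd_above ((\<lambda>y. \<bar>\<alpha> i y\<bar>) ` {x 1..x N})" by (rule bounded_imp_bdd_above)
    hence "\<bar>\<alpha> i y\<bar> \<le> (SUP y\<in>{x 1..x N}. \<bar>\<alpha> i y\<bar>)" using y by (intro cSUP_upper)
    also have "\<dots> \<le> s" unfolding s_def using i by (intro Max_ge) auto
    finally show ?thesis .
  qed
  define F where "F = (\<lambda>n. mkz (x 1) (x N) n (q n) f)"
  have q0: "0 < q n" and q1: "q n \<le> 1" for n using q01[of n] by auto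
  have Fc: "continuous_on {x 1..x N} (F n)" if n: "1 \<le> n" for n
    unfolding F_def by (rule mkz_cont[OF x1N q0 q1 n fc])
  have F1: "F n (x 1) = f (x 1)" if n: "1 \<le> n" for n
    unfolding F_def by (rule mkz_x1[OF x1N q0 q1 n fc])
  have FN: "F n (x N) = f (x N)" for n unfolding F_def by (simp add: mkz_def)
  define Gn where "Gn = (\<lambda>n. mkz_fractal (x 1) (x N) N (\<lambda>i t. a i * t + b i) \<alpha> n (q n) f)"
  have Gprop: "continuous_on {x 1..x N} (Gn n) \<and> (\<forall>y. y \<notin> {x 1..x N} \<longrightarrow> Gn n y = 0) \<and>
      fixeq x N a b f (F n) \<alpha> (Gn n)" if n: "1 \<le> n" for n
  proof -
    note facts = geo fc Fc[OF n] F1[OF n] FN \<alpha>c \<alpha>s s1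
    have ex1: "\<exists>!Gf. continuous_on {x 1..x N} Gf \<and> (\<forall>y. y \<notin> {x 1..x N} \<longrightarrow> Gf y = 0) \<and>
      fixeq x N a b f (F n) \<alpha> Gf"
      by (rule fix_ex1[where x=x and N=N and a=a and b=b and f=f and F="F n" and \<alpha>=\<alpha> and s=s]) (fact facts)+
    have fd: "fixeq x N a b f (F n) \<alpha> G = (\<forall>i\<in>{1..N-1}. \<forall>y\<in>{x 1..x N}.
       G (a i * y + b i) = f (a i * y + b i) + \<alpha> i y * (G y - F n y))" for G
      by (rule fixeq_def[where x=x and N=N and a=a and b=b and f=f and F="F n" and \<alpha>=\<alpha> and s=s]) (fact facts)+
    define P where "P = (\<lambda>G. continuous_on {x 1..x N} G \<and> (\<forall>y. y \<notin> {x 1..x N} \<longrightarrow> G y = 0) \<and>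
      (\<forall>i\<in>{1..N-1}. \<forall>y\<in>{x 1..x N}. G (a i * y + b i) = f (a i * y + b i) + \<alpha> i y * (G y - F n y)))"
    have ex1': "\<exists>!G. P G" using ex1 unfolding fd P_def .
    have "Gn n = (THE G. P G)"
      unfolding Gn_def mkz_fractal_def P_def F_def by simp
    hence "P (Gn n)" using theI'[OF ex1'] by simp
    thus ?thesis unfolding P_def fd by simp
  qed
  have part1: "\<forall>n\<ge>1. \<forall>y\<in>{x 1..x N}. g y \<le> Gn n y"
  proof (intro allI impI ballI)
    fix n :: nat and y :: real assume n: "1 \<le> n" and y: "y \<in> {x 1..x N}"
    define Phi where "Phi = (SUP t\<in>{x 1..x N}. F n t)"
    define phig where "phig = (INF t\<in>{x 1..x N}. g t)"
    define phi where "phi = (\<lambda>i. INF t\<in>{x 1..x N}. f (a i * t + b i) - g (a i * t + b i))"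
    have bF: "bdd_above (F n ` {x 1..x N})"
      by (intro bounded_imp_bdd_above compact_imp_bounded compact_continuous_image Fc[OF n]) auto
    have bg: "bdd_below (g ` {x 1..x N})"
      by (intro bounded_imp_bdd_below compact_imp_bounded compact_continuous_image gc) auto
    have phi_le: "phi i \<le> f (a i * t + b i) - g (a i * t + b i)"
      if i: "i \<in> {1..N-1}" and t: "t \<in> {x 1..x N}" for i t
    proof -
      have uI: "(\<lambda>t. a i * t + b i) ` {x 1..x N} \<subseteq> {x 1..x N}" using uI[OF i] by auto
      have "continuous_on {x 1..x N} (\<lambda>t. a i * t + b i)" by (intro continuous_intros)
      hence "continuous_on {x 1..x N} (\<lambda>t. f (a i * t + b i) - g (a i * t + b i))"
        using continuous_on_compose2[OF fc _ uI] continuous_on_compose2[OF gc _ uI]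
        by (intro continuous_intros) auto
      hence "bdd_below ((\<lambda>t. f (a i * t + b i) - g (a i * t + b i)) ` {x 1..x N})"
        by (intro bounded_imp_bdd_below compact_imp_bounded compact_continuous_image) auto
      thus ?thesis unfolding phi_def using t by (intro cINF_lower)
    qed
    have phi0: "0 \<le> phi i" if i: "i \<in> {1..N-1}" for i
      unfolding phi_def using Ine fg uI[OF i] by (intro cINF_greatest) auto
    have \<alpha>0: "0 \<le> \<alpha> i t" if "i \<in> {1..N-1}" "t \<in> {x 1..x N}" for i t
      using \<alpha>bound[OF n that] by simp
    have \<alpha>phi: "\<alpha> i t * (Phi - phig) \<le> phi i" if it: "i \<in> {1..N-1}" "t \<in> {x 1..x N}" for i t
    proof -
      have b: "\<alpha> i t \<le> phi i / (Phi - phig)" using \<alpha>bound[OF n it]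
        by (simp add: Phi_def phig_def phi_def F_def)
      show ?thesis
      proof (cases "0 < Phi - phig")
        case True thus ?thesis using b by (simp add: pos_le_divide_eq)
      next
        case False
        hence "phi i / (Phi - phig) \<le> 0" using phi0[OF it(1)] by (simp add: divide_nonneg_nonpos)
        hence "\<alpha> i t = 0" using b \<alpha>0[OF it] by simp
        thus ?thesis using phi0[OF it(1)] by simp
      qed
    qed
    have Phi: "F n t \<le> Phi" if "t \<in> {x 1..x N}" for t unfolding Phi_def using bF that by (intro cSUP_upper)
    have phig: "phig \<le> g t" if "t \<in> {x 1..x N}" for t unfolding phig_def using bg that by (intro cINF_lower)
    have GP: "continuous_on {x 1..x N} (Gn n)" "fixeq x N a b f (F n) \<alpha> (Gn n)" using Gprop[OF n] by auto
    show "g y \<le> Gn n y"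
      by (rule fix_pos[where x=x and N=N and a=a and b=b and f=f and F="F n" and \<alpha>=\<alpha> and s=s
          and Gf="Gn n" and g=g and Phi=Phi and phig=phig and phi=phi and z=y])
        (fact geo fc Fc[OF n] F1[OF n] FN \<alpha>c \<alpha>s s1 GP gc \<alpha>0 \<alpha>phi phi_le Phi phig y)+
  qed
  have part2: "uniform_limit {x 1..x N} Gn f sequentially"
    unfolding uniform_limit_iff
  proof (intro allI impI)
    fix e :: real assume e: "0 < e"
    define E where "E = e * (1 - s) / 2"
    have E: "0 < E" using e s1 by (simp add: E_def)
    have hc: "continuous_on {0..1} (hh (x 1) (x N) f)" by (rule hh_cont[OF x1N q0 q1 _ fc, of 1]) simp
    obtain K where K: "0 \<le> K" and Kb: "\<forall>q n t. 0 < q \<longrightarrow> q \<le> 1 \<longrightarrow> 1 \<le> n \<longrightarrow> 0 \<le> t \<longrightarrow> t < 1 \<longrightarrow>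
      \<bar>(\<Sum>k. wt q n t k * hh (x 1) (x N) f (nd q n k)) - hh (x 1) (x N) f t\<bar> \<le> E / 2 + K / qint q n"
      using approx_unif[OF hc, of "E / 2"] E by auto
    define M where "M = 2 * (K + 1) / E"
    have "eventually (\<lambda>n. M \<le> qint (q n) n) sequentially" by (rule qint_big[OF q01 qlim])
    moreover have "eventually (\<lambda>n. 1 \<le> n) sequentially" by (rule eventually_ge_at_top)
    ultimately show "\<forall>\<^sub>F n in sequentially. \<forall>y\<in>{x 1..x N}. dist (Gn n y) (f y) < e"
    proof eventually_elim
      case (elim n)
      note n = elim(2)
      have Mpos: "0 < M" using K E by (simp add: M_def)
      have KM: "K / qint (q n) n \<le> E / 2"
      proof -
        have qp: "0 < qint (q n) n" using Mpos elim(1) by linarith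
        have "K / qint (q n) n \<le> K / M" using K Mpos elim(1) by (intro divide_left_mono) auto
        also have "\<dots> = K * E / (2 * (K + 1))" using E K by (simp add: M_def field_simps)
        also have "\<dots> \<le> E / 2" using E K by (simp add: field_simps)
        finally show ?thesis .
      qed
      have FE: "\<bar>f y - F n y\<bar> \<le> E" if y: "y \<in> {x 1..x N}" for y
      proof (cases "y = x N")
        case True thus ?thesis using FN E by simp
      next
        case False
        hence y1: "x 1 \<le> y" "y < x N" using y by auto
        define t where "t = (y - x 1) / (x N - x 1)"
        have t: "0 \<le> t" "t < 1" using y1 x1N by (auto simp: t_def divide_simps)
        have ht: "hh (x 1) (x N) f t = f y"
          using hh_def[OF x1N q0 q1 n fc] x1N by (simp add: t_def)
        have "F n y = (\<Sum>k. wt (q n) n t k * hh (x 1) (x N) f (nd (q n) n k))"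
          unfolding F_def t_def by (rule mkz_eq[OF x1N q0 q1 n fc y1])
        hence "\<bar>F n y - f y\<bar> \<le> E / 2 + K / qint (q n) n" using Kb q0 q1 n t ht by metis
        thus ?thesis using KM by linarith
      qed
      show ?case
      proof
        fix y assume y: "y \<in> {x 1..x N}"
        have GP: "continuous_on {x 1..x N} (Gn n)" "fixeq x N a b f (F n) \<alpha> (Gn n)" using Gprop[OF n] by auto
        have "\<bar>Gn n y - f y\<bar> \<le> s * E / (1 - s)"
          by (rule fix_bound[where x=x and N=N and a=a and b=b and f=f and F="F n" and \<alpha>=\<alpha> and s=s
            and Gf="Gn n" and E=E and z=y])
            (fact geo fc Fc[OF n] F1[OF n] FN \<alpha>c \<alpha>s s1 GP FE y)+
        also have "\<dots> = s * e / 2"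
        proof -
          have h: "1 - s \<noteq> 0" using s1 by simp
          have E2: "s * E = (s * e / 2) * (1 - s)" unfolding E_def by (simp add: algebra_simps)
          show ?thesis by (simp only: E2 nonzero_mult_div_cancel_right[OF h])
        qed
        also have "\<dots> < e" using s1 e by (simp add: field_simps)
        finally show "dist (Gn n y) (f y) < e" by (simp add: dist_real_def)
      qed
    qed
  qed
  show ?thesis using part1 part2 unfolding Gn_def by simp
qed

end
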